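(* Let $\varphi$ be a Musielak–Orlicz function with $\varphi\in A_\infty(\Omega)$. If the stochastic basis $(\mathcal F_n)_{n\in\mathbb Z_+}$ is regular, then $\varphi\in\mathbb S$.
   Context: Let $(\Omega,\mathcal F,\mathbb P)$ be a probability space, $(\mathcal F_n)_{n\in\mathbb Z_+}$ (with $\mathbb Z_+=\{0,1,2,\dots\}$) a nondecreasing sequence of sub-$\sigma$-algebras of $\mathcal F$, and $\mathbb E_n$ the conditional expectation with respect to $\mathcal F_n$. A Musielak–Orlicz function is a map $\varphi:\Omega\times[0,\infty)\to[0,\infty)$ such that for each $x$, $\varphi(x,\cdot)$ is nondecreasing, $\varphi(x,0)=0$, $\lim_{t\to\infty}\varphi(x,t)=\infty$, and for each $t$, $\varphi(\cdot,t)$ is measurable; it is assumed that $\varphi(\cdot,t)$ is strictly positive (for $t>0$) and integrable for every $t$, and one writes $\varphi_n(\cdot,t):=\mathbb E_n(\varphi(\cdot,t))$. For $q\in(1,\infty)$, $\varphi$ satisfies the uniform $A_q(\Omega)$ condition if there is $K>0$ with $\sup_{t>0}\mathbb E_n(\varphi(\cdot,t))\,[\mathbb E_n(\varphi(\cdot,t)^{-1/(q-1)})]^{q-1}\le K$ a.e. for all $n\in\mathbb Z_+$; $\varphi\in A_1(\Omega)$ if $\sup_{t>0}\mathbb E_n(\varphi(\cdot,t))/\varphi(\cdot,t)\le K$ a.e. for all $n$; $A_\infty(\Omega):=\bigcup_{q\ge1}A_q(\Omega)$. The basis is regular if there is $R>0$ such that $f_n\le Rf_{n-1}$ for all $n\ge1$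 and every nonnegative martingale $(f_n)$. $\varphi\in\mathbb S$ means there is $K>0$ with $K^{-1}\varphi_{n-1}(\omega,t)\le\varphi_n(\omega,t)\le K\varphi_{n-1}(\omega,t)$ for all $t\ge0$, $n\ge1$ and a.e. $\omega$. *)

theory Defs
  imports "HOL-Probability.Probability"
begin

definition stoch_basis :: "'a measure \<Rightarrow> (nat \<Rightarrow> 'a measure) \<Rightarrow> bool" where
  "stoch_basis M F \<longleftrightarrow> prob_space M \<and> (\<forall>n. subalgebra M (F n))
      \<and> (\<forall>n m. n \<le> m \<longrightarrow> sets (F n) \<subseteq> sets (F m))"

definition martingale :: "'a measure \<Rightarrow> (nat \<Rightarrow> 'a measure) \<Rightarrow> (nat \<Rightarrow> 'a \<Rightarrow> real) \<Rightarrow> bool" where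
  "martingale M F f \<longleftrightarrow>
     (\<forall>n. integrable M (f n) \<and> f n \<in> borel_measurable (F n)) \<and>
     (\<forall>n. AE x in M. real_cond_exp M (F n) (f (Suc n)) x = f n x)"

definition regular_basis :: "'a measure \<Rightarrow> (nat \<Rightarrow> 'a measure) \<Rightarrow> bool" where
  "regular_basis M F \<longleftrightarrow> (\<exists>R>0. \<forall>f. martingale M F f \<and> (\<forall>n. AE x in M. f n x \<ge> 0) \<longrightarrow>
       (\<forall>n\<ge>1. AE x in M. f n x \<le> R * f (n - 1) x))"

text \<open>Musielak--Orlicz function (only values at t \<ge> 0 are relevant), with the standing
  assumptions: phi(.,t) strictly positive for t > 0 and integrable for every t.\<close>
definition musielak_orlicz :: "'a measure \<Rightarrow> ('a \<Rightarrow> real \<Rightarrow> real) \<Rightarrow> bool" where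
  "musielak_orlicz M \<phi> \<longleftrightarrow>
     (\<forall>x\<in>space M. mono_on {0..} (\<phi> x) \<and> \<phi> x 0 = 0 \<and> filterlim (\<phi> x) at_top at_top
        \<and> (\<forall>t\<ge>0. \<phi> x t \<ge> 0) \<and> (\<forall>t>0. \<phi> x t > 0)) \<and>
     (\<forall>t\<ge>0. (\<lambda>x. \<phi> x t) \<in> borel_measurable M \<and> integrable M (\<lambda>x. \<phi> x t))"

text \<open>Uniform A_q condition, q > 1.  The conditional expectation of phi^{-1/(q-1)} is taken
  in [0,\<infinity>] (it need not be integrable); it is required to be finite and the product bounded.\<close>
definition uniform_Aq :: "'a measure \<Rightarrow> (nat \<Rightarrow> 'a measure) \<Rightarrow> real \<Rightarrow> ('a \<Rightarrow> real \<Rightarrow> real) \<Rightarrow> bool" where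
  "uniform_Aq M F q \<phi> \<longleftrightarrow> (\<exists>K>0. \<forall>n. \<forall>t>0. AE x in M.
      nn_cond_exp M (F n) (\<lambda>y. ennreal (\<phi> y t powr (-1 / (q - 1)))) x < \<infinity> \<and>
      real_cond_exp M (F n) (\<lambda>y. \<phi> y t) x *
        enn2real (nn_cond_exp M (F n) (\<lambda>y. ennreal (\<phi> y t powr (-1 / (q - 1)))) x) powr (q - 1) \<le> K)"

definition uniform_A1 :: "'a measure \<Rightarrow> (nat \<Rightarrow> 'a measure) \<Rightarrow> ('a \<Rightarrow> real \<Rightarrow> real) \<Rightarrow> bool" where
  "uniform_A1 M F \<phi> \<longleftrightarrow> (\<exists>K>0. \<forall>n. \<forall>t>0. AE x in M.
      real_cond_exp M (F n) (\<lambda>y. \<phi> y t) x \<le> K * \<phi> x t)"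

definition uniform_Ainf :: "'a measure \<Rightarrow> (nat \<Rightarrow> 'a measure) \<Rightarrow> ('a \<Rightarrow> real \<Rightarrow> real) \<Rightarrow> bool" where
  "uniform_Ainf M F \<phi> \<longleftrightarrow> uniform_A1 M F \<phi> \<or> (\<exists>q>1. uniform_Aq M F q \<phi>)"

definition class_S :: "'a measure \<Rightarrow> (nat \<Rightarrow> 'a measure) \<Rightarrow> ('a \<Rightarrow> real \<Rightarrow> real) \<Rightarrow> bool" where
  "class_S M F \<phi> \<longleftrightarrow> (\<exists>K>0. \<forall>t\<ge>0. \<forall>n\<ge>1. AE x in M.
      inverse K * real_cond_exp M (F (n - 1)) (\<lambda>y. \<phi> y t) x \<le> real_cond_exp M (F n) (\<lambda>y. \<phi> y t) x \<and>
      real_cond_exp M (F n) (\<lambda>y. \<phi> y t) x \<le> K * real_cond_exp M (F (n - 1)) (\<lambda>y. \<phi> y t) x)"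

end

theory Submission
  imports Defs
begin

context sigma_finite_subalgebra begin

lemma nn_zero: "AE x in M. nn_cond_exp M F (\<lambda>x. 0) x = 0"
  using nn_cond_exp_F_meas[of "\<lambda>x. 0"] by auto

lemma nn_real:
  assumes g: "integrable M g" "\<forall>x\<in>space M. g x \<ge> 0"
  shows "AE x in M. nn_cond_exp M F (\<lambda>x. ennreal (g x)) x = ennreal (real_cond_exp M F g x)"
proof -
  have [measurable]: "g \<in> borel_measurable M" using g by auto
  have "AE x in M. nn_cond_exp M F (\<lambda>x. ennreal (- g x)) x = nn_cond_exp M F (\<lambda>x. 0) x"
    by (rule nn_cond_exp_cong) (use g in \<open>auto simp: ennreal_neg\<close>)
  with nn_zero have z: "AE x in M. nn_cond_exp M F (\<lambda>x. ennreal (- g x)) x = 0" by auto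
  have "(\<integral>\<^sup>+ x. nn_cond_exp M F (\<lambda>x. ennreal (g x)) x \<partial>M) = (\<integral>\<^sup>+ x. ennreal (g x) \<partial>M)"
    using nn_cond_exp_intg[of "\<lambda>x. 1" "\<lambda>x. ennreal (g x)"] by simp
  also have "\<dots> < \<infinity>" using integrableD(2)[OF g(1)] by (simp add: less_top)
  finally have "AE x in M. nn_cond_exp M F (\<lambda>x. ennreal (g x)) x \<noteq> \<infinity>"
    by (intro nn_integral_PInf_AE) auto
  with z show ?thesis
  proof eventually_elim
    case (elim x)
    then show ?case unfolding real_cond_exp_def using elim(1) by (simp add: ennreal_enn2real_if)
  qed
qed

lemma nn_pos:
  assumes [measurable]: "f \<in> borel_measurable M" and pos: "\<forall>x\<in>space M. f x > 0"
  shows "AE x in M. nn_cond_exp M F f x > 0"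
proof -
  define Z where "Z = {x\<in>space M. nn_cond_exp M F f x = 0}"
  have sp: "space F = space M" using subalg unfolding subalgebra_def by auto
  have "{x\<in>space F. nn_cond_exp M F f x = 0} \<in> sets F" by measurable
  then have ZF: "Z \<in> sets F" unfolding Z_def sp .
  then have ZM[measurable]: "Z \<in> sets M" using subalg unfolding subalgebra_def by auto
  have "(\<integral>\<^sup>+ x. indicator Z x * f x \<partial>M) = (\<integral>\<^sup>+ x. indicator Z x * nn_cond_exp M F f x \<partial>M)"
    by (rule nn_cond_exp_intg[symmetric]) (use ZF in auto)
  also have "\<dots> = 0"
    by (rule nn_integral_zero') (auto simp: Z_def indicator_def intro!: AE_I2)
  finally have "AE x in M. indicator Z x * f x = 0"
    by (subst nn_integral_0_iff_AE[symmetric]) auto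
  with AE_space show ?thesis
    by eventually_elim (use pos in \<open>auto simp: Z_def indicator_def zero_less_iff_neq_zero split: if_splits\<close>)
qed

lemma enn_lin:
  fixes a b c d :: real
  assumes "0 \<le> a" "0 \<le> b" "0 \<le> c" "0 \<le> d"
  shows "ennreal (a * b + c * d) = ennreal a * ennreal b + ennreal c * ennreal d"
  using assms by (subst ennreal_plus) (auto simp: ennreal_mult)

lemma young_pt:
  fixes q v :: real assumes q: "q > 1" and v: "v > 0"
  shows "1 \<le> v / q + (q - 1) / q * v powr (-1 / (q - 1))"
proof -
  have "v powr (1/q) * (v powr (-1 / (q - 1))) powr ((q-1)/q) \<le> (1/q) * v + ((q-1)/q) * v powr (-1 / (q - 1))"
    by (rule Youngs_inequality_0) (use q v in \<open>auto simp: field_simps\<close>)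
  moreover have "(v powr (-1 / (q - 1))) powr ((q-1)/q) = v powr (- (1/q))"
    using q by (simp add: powr_powr)
  moreover have "v powr (1/q) * v powr (- (1/q)) = 1"
    using v by (simp add: powr_add[symmetric])
  ultimately show ?thesis by simp
qed

lemma cond_young:
  assumes q: "q > 1"
    and [measurable]: "\<phi> \<in> borel_measurable M" and pos: "\<forall>x\<in>space M. \<phi> x > 0"
    and int: "integrable M \<phi>"
    and fin: "AE x in M. nn_cond_exp M F (\<lambda>y. ennreal (\<phi> y powr (-1 / (q - 1)))) x < \<infinity>"
  shows "AE x in M. real_cond_exp M F \<phi> x > 0 \<and>
     real_cond_exp M F \<phi> x powr (1 / (q - 1)) * enn2real (nn_cond_exp M F (\<lambda>y. ennreal (\<phi> y powr (-1 / (q - 1)))) x) \<ge> 1"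
proof -
  define s where "s = 1 / (q - 1)"
  have s: "s > 0" using q by (simp add: s_def)
  define a where "a = real_cond_exp M F \<phi>"
  define W where "W = (\<lambda>y. ennreal (\<phi> y powr (- s)))"
  have [measurable]: "W \<in> borel_measurable M" unfolding W_def by measurable
  have [measurable]: "a \<in> borel_measurable F" unfolding a_def by simp
  define l where "l = (\<lambda>x. if a x > 0 then 1 / a x else 1)"
  have [measurable]: "l \<in> borel_measurable F" unfolding l_def by measurable
  have lM[measurable]: "l \<in> borel_measurable M" by (rule measurable_from_subalg[OF subalg]) simp
  have lpos: "l x > 0" for x unfolding l_def by auto
  define c where "c = (q - 1) / q"
  have c: "c > 0" using q by (simp add: c_def)
  have apos: "AE x in M. a x > 0"
  proof -
    have "AE x in M. nn_cond_exp M F (\<lambda>x. ennreal (\<phi> x)) x > 0"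
      by (rule nn_pos) (use pos in auto)
    moreover have "AE x in M. nn_cond_exp M F (\<lambda>x. ennreal (\<phi> x)) x = ennreal (a x)"
      unfolding a_def by (rule nn_real) (use int pos in \<open>auto simp: less_imp_le\<close>)
    ultimately show ?thesis by eventually_elim (simp add: ennreal_neg)
  qed
  have "AE x in M. nn_cond_exp M F (\<lambda>x. 1) x
     \<le> nn_cond_exp M F (\<lambda>x. ennreal (l x / q) * ennreal (\<phi> x) + ennreal (c * l x powr (- s)) * W x) x"
  proof (rule nn_cond_exp_mono)
    show "AE x in M. 1 \<le> ennreal (l x / q) * ennreal (\<phi> x) + ennreal (c * l x powr (- s)) * W x"
    proof (rule AE_I2)
      fix x assume x: "x \<in> space M"
      have v: "l x * \<phi> x > 0" using lpos pos x by auto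
      have "1 \<le> (l x * \<phi> x) / q + c * (l x * \<phi> x) powr (- s)"
        using young_pt[OF q v] unfolding c_def s_def by (simp add: divide_simps)
      also have "\<dots> = l x / q * \<phi> x + c * l x powr (- s) * \<phi> x powr (- s)"
        using lpos[of x] pos x by (simp add: powr_mult)
      finally have "ennreal 1 \<le> ennreal (l x / q * \<phi> x + c * l x powr (- s) * \<phi> x powr (- s))"
        by (rule ennreal_leI)
      also have "\<dots> = ennreal (l x / q) * ennreal (\<phi> x) + ennreal (c * l x powr (- s)) * W x"
        unfolding W_def using lpos[of x] pos x q c
        by (intro enn_lin) (auto simp: less_imp_le)
      finally show "1 \<le> ennreal (l x / q) * ennreal (\<phi> x) + ennreal (c * l x powr (- s)) * W x" by simp
    qed
  qed auto
  moreover have "AE x in M. nn_cond_exp M F (\<lambda>x. 1) x = 1"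
    using nn_cond_exp_F_meas[of "\<lambda>x. 1"] by auto
  moreover have "AE x in M. nn_cond_exp M F (\<lambda>x. ennreal (l x / q) * ennreal (\<phi> x)) x
      + nn_cond_exp M F (\<lambda>x. ennreal (c * l x powr (- s)) * W x) x
      = nn_cond_exp M F (\<lambda>x. ennreal (l x / q) * ennreal (\<phi> x) + ennreal (c * l x powr (- s)) * W x) x"
    by (rule nn_cond_exp_sum) auto
  moreover have "AE x in M. ennreal (l x / q) * nn_cond_exp M F (\<lambda>x. ennreal (\<phi> x)) x
      = nn_cond_exp M F (\<lambda>x. ennreal (l x / q) * ennreal (\<phi> x)) x"
    by (rule nn_cond_exp_prod) auto
  moreover have "AE x in M. ennreal (c * l x powr (- s)) * nn_cond_exp M F W x
      = nn_cond_exp M F (\<lambda>x. ennreal (c * l x powr (- s)) * W x) x"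
    by (rule nn_cond_exp_prod) auto
  moreover have "AE x in M. nn_cond_exp M F (\<lambda>x. ennreal (\<phi> x)) x = ennreal (a x)"
    unfolding a_def by (rule nn_real) (use int pos in \<open>auto simp: less_imp_le\<close>)
  moreover note apos
  moreover have "AE x in M. nn_cond_exp M F W x < \<infinity>" using fin unfolding W_def s_def by simp
  ultimately show ?thesis
  proof eventually_elim
    case (elim x)
    define b where "b = enn2real (nn_cond_exp M F W x)"
    have Wb: "nn_cond_exp M F W x = ennreal b" "b \<ge> 0" unfolding b_def using elim(8) by auto
    have lx: "l x = 1 / a x" using elim(7) unfolding l_def by simp
    have "ennreal 1 \<le> ennreal (l x / q) * ennreal (a x) + ennreal (c * l x powr (- s)) * ennreal b"
      using elim(1-6) Wb by simp
    also have "\<dots> = ennreal (l x / q * a x + c * l x powr (- s) * b)"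
      using lpos[of x] elim(7) q c Wb
      by (intro enn_lin[symmetric]) (auto simp: less_imp_le)
    finally have "1 \<le> l x / q * a x + c * l x powr (- s) * b"
      by (subst (asm) ennreal_le_iff) (use lpos[of x] elim(7) q c Wb in \<open>auto intro!: add_nonneg_nonneg mult_nonneg_nonneg\<close>)
    also have "\<dots> = 1 / q + c * (a x powr s * b)"
      using elim(7) q by (simp add: lx powr_minus_divide powr_divide)
    finally have X: "1 \<le> 1 / q + c * (a x powr s * b)" .
    have "c = 1 - 1 / q" using q unfolding c_def by (simp add: field_simps)
    then have "c * (a x powr s * b) \<ge> c * 1" using X by linarith
    then have "a x powr s * b \<ge> 1" using c by simp
    then show ?case using elim(7) unfolding a_def b_def W_def s_def by simp
  qed
qed

end


lemma sb_sfs: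
  assumes "stoch_basis M F"
  shows "sigma_finite_subalgebra M (F n)"
proof -
  have "prob_space M" "subalgebra M (F n)" using assms unfolding stoch_basis_def by auto
  then have "finite_measure_subalgebra M (F n)"
    unfolding finite_measure_subalgebra_def finite_measure_subalgebra_axioms_def
    using prob_space.finite_measure by blast
  then show ?thesis using finite_measure_subalgebra_is_sigma_finite by blast
qed

lemma sb_sub:
  assumes "stoch_basis M F" "n \<le> m"
  shows "subalgebra (F m) (F n)"
proof -
  have "subalgebra M (F n)" "subalgebra M (F m)" "sets (F n) \<subseteq> sets (F m)"
    using assms unfolding stoch_basis_def by auto
  then show ?thesis unfolding subalgebra_def by auto
qed

lemma sb_subM:
  assumes "stoch_basis M F"
  shows "subalgebra M (F n)"
  using assms unfolding stoch_basis_def by auto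

lemma sb_meas:
  assumes "stoch_basis M F" "n \<le> m" "f \<in> borel_measurable (F n)"
  shows "f \<in> borel_measurable (F m)"
  by (rule measurable_from_subalg[OF sb_sub[OF assms(1,2)] assms(3)])

lemma reg_real:
  assumes sb: "stoch_basis M F"
    and R: "\<forall>f. martingale M F f \<and> (\<forall>n. AE x in M. f n x \<ge> 0) \<longrightarrow>
       (\<forall>n\<ge>1. AE x in M. f n x \<le> R * f (n - 1) x)"
    and g: "integrable M g" "AE x in M. g x \<ge> 0" and n: "n \<ge> 1"
  shows "AE x in M. real_cond_exp M (F n) g x \<le> R * real_cond_exp M (F (n - 1)) g x"
proof -
  let ?f = "\<lambda>k. real_cond_exp M (F k) g"
  have mg: "martingale M F ?f"
    unfolding martingale_def
  proof (intro conjI allI)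
    fix k
    show "integrable M (?f k)" using sigma_finite_subalgebra.real_cond_exp_int(1)[OF sb_sfs[OF sb] g(1)] .
    show "?f k \<in> borel_measurable (F k)" by simp
    show "AE x in M. real_cond_exp M (F k) (?f (Suc k)) x = ?f k x"
      using sigma_finite_subalgebra.real_cond_exp_nested_subalg[OF sb_sfs[OF sb] sb_subM[OF sb] sb_sub[OF sb] g(1), of k "Suc k"]
      by simp
  qed
  have pos: "\<forall>k. AE x in M. ?f k x \<ge> 0"
    using sigma_finite_subalgebra.real_cond_exp_pos[OF sb_sfs[OF sb] g(2)] borel_measurable_integrable[OF g(1)] by blast
  show ?thesis using R mg pos n by blast
qed


lemma reg_nn:
  assumes sb: "stoch_basis M F"
    and R: "\<forall>f. martingale M F f \<and> (\<forall>n. AE x in M. f n x \<ge> 0) \<longrightarrow>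
       (\<forall>n\<ge>1. AE x in M. f n x \<le> R * f (n - 1) x)"
    and Rpos: "R > 0"
    and [measurable]: "w \<in> borel_measurable M" and wpos: "\<forall>x\<in>space M. w x \<ge> 0" and n: "n \<ge> 1"
    and fin: "AE x in M. nn_cond_exp M (F (n - 1)) (\<lambda>y. ennreal (w y)) x < \<infinity>"
  shows "AE x in M. nn_cond_exp M (F n) (\<lambda>y. ennreal (w y)) x \<le> ennreal R * nn_cond_exp M (F (n - 1)) (\<lambda>y. ennreal (w y)) x"
proof -
  interpret P: sigma_finite_subalgebra M "F (n - 1)" by (rule sb_sfs[OF sb])
  interpret N: sigma_finite_subalgebra M "F n" by (rule sb_sfs[OF sb])
  let ?W = "\<lambda>y. ennreal (w y)"
  have sp: "space (F (n - 1)) = space M" using sb_subM[OF sb] unfolding subalgebra_def by auto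
  have "\<forall>N::nat. AE x in M. nn_cond_exp M (F (n - 1)) ?W x \<le> of_nat N \<longrightarrow>
      nn_cond_exp M (F n) ?W x \<le> ennreal R * nn_cond_exp M (F (n - 1)) ?W x"
  proof
    fix N :: nat
    define B where "B = {x\<in>space M. nn_cond_exp M (F (n - 1)) ?W x \<le> of_nat N}"
    have "{x\<in>space (F (n - 1)). nn_cond_exp M (F (n - 1)) ?W x \<le> of_nat N} \<in> sets (F (n - 1))"
      by measurable
    then have BP[measurable]: "B \<in> sets (F (n - 1))" unfolding B_def sp .
    have BN[measurable]: "B \<in> sets (F n)" using BP sb unfolding stoch_basis_def
      by (meson diff_le_self subsetD)
    have BM[measurable]: "B \<in> sets M" using BP sb_subM[OF sb] unfolding subalgebra_def by auto
    define g where "g = (\<lambda>x. indicator B x * w x)"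
    have [measurable]: "g \<in> borel_measurable M" unfolding g_def by measurable
    have gW: "(\<lambda>x. ennreal (g x)) = (\<lambda>x. indicator B x * ?W x)"
      by (auto simp: g_def indicator_def fun_eq_iff)
    have gpos: "\<forall>x\<in>space M. g x \<ge> 0" using wpos by (auto simp: g_def indicator_def)
    have "(\<integral>\<^sup>+ x. ennreal (g x) \<partial>M) = (\<integral>\<^sup>+ x. indicator B x * ?W x \<partial>M)" by (simp add: gW)
    also have "\<dots> = (\<integral>\<^sup>+ x. indicator B x * nn_cond_exp M (F (n - 1)) ?W x \<partial>M)"
      by (rule P.nn_cond_exp_intg[OF borel_measurable_indicator[OF BP], symmetric]) auto
    also have "\<dots> \<le> (\<integral>\<^sup>+ x. of_nat N \<partial>M)"
      by (rule nn_integral_mono) (auto simp: B_def indicator_def)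
    also have "\<dots> < \<infinity>"
      using sb unfolding stoch_basis_def by (simp add: prob_space.emeasure_space_1 ennreal_of_nat_eq_real_of_nat)
    finally have gint: "integrable M g"
      by (intro integrableI_nonneg) (use gpos in \<open>auto intro!: AE_I2\<close>)
    have r: "AE x in M. real_cond_exp M (F n) g x \<le> R * real_cond_exp M (F (n - 1)) g x"
      by (rule reg_real[OF sb R gint _ n]) (use gpos in \<open>auto intro!: AE_I2\<close>)
    have e1: "AE x in M. nn_cond_exp M (F n) (\<lambda>x. ennreal (g x)) x = ennreal (real_cond_exp M (F n) g x)"
      by (rule N.nn_real[OF gint gpos])
    have e2: "AE x in M. nn_cond_exp M (F (n-1)) (\<lambda>x. ennreal (g x)) x = ennreal (real_cond_exp M (F (n-1)) g x)"
      by (rule P.nn_real[OF gint gpos])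
    have p1: "AE x in M. indicator B x * nn_cond_exp M (F n) ?W x = nn_cond_exp M (F n) (\<lambda>x. ennreal (g x)) x"
      unfolding gW by (rule N.nn_cond_exp_prod[OF borel_measurable_indicator[OF BN]]) auto
    have p2: "AE x in M. indicator B x * nn_cond_exp M (F (n-1)) ?W x = nn_cond_exp M (F (n-1)) (\<lambda>x. ennreal (g x)) x"
      unfolding gW by (rule P.nn_cond_exp_prod[OF borel_measurable_indicator[OF BP]]) auto
    have pos2: "AE x in M. real_cond_exp M (F (n-1)) g x \<ge> 0"
      by (rule P.real_cond_exp_pos) (use gpos in \<open>auto intro!: AE_I2\<close>)
    from r e1 e2 p1 p2 pos2 AE_space show "AE x in M. nn_cond_exp M (F (n - 1)) ?W x \<le> of_nat N \<longrightarrow>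
      nn_cond_exp M (F n) ?W x \<le> ennreal R * nn_cond_exp M (F (n - 1)) ?W x"
    proof eventually_elim
      case (elim x)
      show ?case
      proof
        assume "nn_cond_exp M (F (n - 1)) ?W x \<le> of_nat N"
        then have xB: "x \<in> B" using elim(7) unfolding B_def by auto
        have "nn_cond_exp M (F n) ?W x = ennreal (real_cond_exp M (F n) g x)"
          using elim(1-4) xB by simp
        also have "\<dots> \<le> ennreal (R * real_cond_exp M (F (n - 1)) g x)"
          using elim(1) by (rule ennreal_leI)
        also have "\<dots> = ennreal R * ennreal (real_cond_exp M (F (n - 1)) g x)"
          using Rpos elim(6) by (simp add: ennreal_mult)
        also have "\<dots> = ennreal R * nn_cond_exp M (F (n - 1)) ?W x"
          using elim(3,5) xB by simp
        finally show "nn_cond_exp M (F n) ?W x \<le> ennreal R * nn_cond_exp M (F (n - 1)) ?W x" .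
      qed
    qed
  qed
  then have "AE x in M. \<forall>N::nat. nn_cond_exp M (F (n - 1)) ?W x \<le> of_nat N \<longrightarrow>
      nn_cond_exp M (F n) ?W x \<le> ennreal R * nn_cond_exp M (F (n - 1)) ?W x"
    by (subst AE_all_countable) auto
  with fin show ?thesis
  proof eventually_elim
    case (elim x)
    obtain N where "nn_cond_exp M (F (n - 1)) ?W x < of_nat N" using ennreal_Ex_less_of_nat elim(1) by auto
    then show ?case using elim(2) by (meson less_imp_le)
  qed
qed

lemma aq_arith:
  fixes q R Kq a b b' a' :: real
  assumes q: "q > 1" and R: "R > 0" and Kq: "Kq > 0" and a: "a > 0" and b: "b \<ge> 0" and b': "b' \<ge> 0"
    and a': "a' \<ge> 0" and A: "a' * b' powr (q - 1) \<le> Kq" and reg: "b \<le> R * b'"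
    and J: "a powr (1 / (q - 1)) * b \<ge> 1"
  shows "a' \<le> Kq * R powr (q - 1) * a"
proof -
  have as: "a powr (1 / (q - 1)) > 0" using a by simp
  have b1: "b \<ge> a powr (- (1 / (q - 1)))"
    using J as by (simp add: powr_minus field_simps)
  have bpos: "b > 0" using b1 a by (smt (verit) powr_gt_zero)
  have b'1: "b' \<ge> b / R" using reg R by (simp add: field_simps)
  have "b' powr (q - 1) \<ge> (b / R) powr (q - 1)"
    by (rule powr_mono2) (use q b'1 bpos R in auto)
  also have "(b / R) powr (q - 1) = b powr (q - 1) / R powr (q - 1)"
    using bpos R by (simp add: powr_divide)
  finally have B1: "b' powr (q - 1) \<ge> b powr (q - 1) / R powr (q - 1)" .
  have "b powr (q - 1) \<ge> (a powr (- (1 / (q - 1)))) powr (q - 1)"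
    by (rule powr_mono2) (use q b1 in auto)
  also have "(a powr (- (1 / (q - 1)))) powr (q - 1) = a powr (-1)"
    using q by (simp add: powr_powr)
  also have "\<dots> = 1 / a" using a by (simp add: powr_minus divide_inverse)
  finally have B2: "b powr (q - 1) \<ge> 1 / a" .
  have Rq: "R powr (q - 1) > 0" using R by simp
  have B3: "b' powr (q - 1) \<ge> 1 / (a * R powr (q - 1))"
    using B1 B2 Rq a by (smt (verit, ccfv_SIG) divide_divide_eq_left divide_right_mono)
  have pos3: "1 / (a * R powr (q - 1)) > 0" using a Rq by simp
  have "a' * (1 / (a * R powr (q - 1))) \<le> a' * b' powr (q - 1)"
    by (rule mult_left_mono[OF B3 a'])
  also have "\<dots> \<le> Kq" by (rule A)
  finally have "a' / (a * R powr (q - 1)) \<le> Kq" by simp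
  then show ?thesis using a Rq by (simp add: field_simps)
qed

lemma mo_facts:
  assumes "musielak_orlicz M \<phi>"
  shows "\<And>t. t \<ge> 0 \<Longrightarrow> (\<lambda>x. \<phi> x t) \<in> borel_measurable M"
    "\<And>t. t \<ge> 0 \<Longrightarrow> integrable M (\<lambda>x. \<phi> x t)"
    "\<And>t x. t \<ge> 0 \<Longrightarrow> x \<in> space M \<Longrightarrow> \<phi> x t \<ge> 0"
    "\<And>t x. t > 0 \<Longrightarrow> x \<in> space M \<Longrightarrow> \<phi> x t > 0"
    "\<And>x. x \<in> space M \<Longrightarrow> \<phi> x 0 = 0"
  using assms unfolding musielak_orlicz_def by auto

lemma down_A1:
  assumes sb: "stoch_basis M F" and mo: "musielak_orlicz M \<phi>" and A: "uniform_A1 M F \<phi>"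
  shows "\<exists>K>0. \<forall>t>0. \<forall>n\<ge>1. AE x in M.
      inverse K * real_cond_exp M (F (n - 1)) (\<lambda>y. \<phi> y t) x \<le> real_cond_exp M (F n) (\<lambda>y. \<phi> y t) x"
proof -
  obtain K where K: "K > 0" and KA: "\<forall>n. \<forall>t>0. AE x in M.
      real_cond_exp M (F n) (\<lambda>y. \<phi> y t) x \<le> K * \<phi> x t"
    using A unfolding uniform_A1_def by blast
  have "\<forall>t>0. \<forall>n\<ge>1. AE x in M.
      inverse K * real_cond_exp M (F (n - 1)) (\<lambda>y. \<phi> y t) x \<le> real_cond_exp M (F n) (\<lambda>y. \<phi> y t) x"
  proof (intro allI impI)
    fix t :: real and n :: nat assume t: "t > 0" and n: "n \<ge> 1"
    let ?f = "\<lambda>y. \<phi> y t"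
    interpret N: sigma_finite_subalgebra M "F n" by (rule sb_sfs[OF sb])
    interpret P: sigma_finite_subalgebra M "F (n - 1)" by (rule sb_sfs[OF sb])
    have fi: "integrable M ?f" using mo_facts(2)[OF mo] t by simp
    have pi: "integrable M (real_cond_exp M (F (n - 1)) ?f)" by (rule P.real_cond_exp_int(1)[OF fi])
    have "AE x in M. real_cond_exp M (F n) (real_cond_exp M (F (n - 1)) ?f) x
        \<le> real_cond_exp M (F n) (\<lambda>x. K * ?f x) x"
      by (rule N.real_cond_exp_mono) (use KA t fi pi in auto)
    moreover have "AE x in M. real_cond_exp M (F n) (\<lambda>x. K * ?f x) x = K * real_cond_exp M (F n) ?f x"
      by (rule N.real_cond_exp_cmult[OF fi])
    moreover have "AE x in M. real_cond_exp M (F n) (real_cond_exp M (F (n - 1)) ?f) x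
        = real_cond_exp M (F (n - 1)) ?f x"
      by (rule N.real_cond_exp_F_meas[OF pi]) (rule sb_meas[OF sb, of "n - 1"], auto)
    ultimately show "AE x in M.
      inverse K * real_cond_exp M (F (n - 1)) ?f x \<le> real_cond_exp M (F n) ?f x"
    proof eventually_elim
      case (elim x)
      then have "real_cond_exp M (F (n - 1)) ?f x \<le> K * real_cond_exp M (F n) ?f x" by simp
      then show ?case using K by (simp add: field_simps)
    qed
  qed
  then show ?thesis using K by blast
qed

lemma down_Aq:
  assumes sb: "stoch_basis M F" and mo: "musielak_orlicz M \<phi>" and q: "q > 1"
    and A: "uniform_Aq M F q \<phi>"
    and R: "\<forall>f. martingale M F f \<and> (\<forall>n. AE x in M. f n x \<ge> 0) \<longrightarrow>
       (\<forall>n\<ge>1. AE x in M. f n x \<le> R * f (n - 1) x)"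
    and Rpos: "R > 0"
  shows "\<exists>K>0. \<forall>t>0. \<forall>n\<ge>1. AE x in M.
      inverse K * real_cond_exp M (F (n - 1)) (\<lambda>y. \<phi> y t) x \<le> real_cond_exp M (F n) (\<lambda>y. \<phi> y t) x"
proof -
  obtain K where K: "K > 0" and KA: "\<forall>n. \<forall>t>0. AE x in M.
      nn_cond_exp M (F n) (\<lambda>y. ennreal (\<phi> y t powr (-1 / (q - 1)))) x < \<infinity> \<and>
      real_cond_exp M (F n) (\<lambda>y. \<phi> y t) x *
        enn2real (nn_cond_exp M (F n) (\<lambda>y. ennreal (\<phi> y t powr (-1 / (q - 1)))) x) powr (q - 1) \<le> K"
    using A unfolding uniform_Aq_def by blast
  define K2 where "K2 = K * R powr (q - 1)"
  have K2: "K2 > 0" using K Rpos by (simp add: K2_def)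
  have "\<forall>t>0. \<forall>n\<ge>1. AE x in M.
      inverse K2 * real_cond_exp M (F (n - 1)) (\<lambda>y. \<phi> y t) x \<le> real_cond_exp M (F n) (\<lambda>y. \<phi> y t) x"
  proof (intro allI impI)
    fix t :: real and n :: nat assume t: "t > 0" and n: "n \<ge> 1"
    let ?f = "\<lambda>y. \<phi> y t"
    let ?w = "\<lambda>y. \<phi> y t powr (-1 / (q - 1))"
    interpret N: sigma_finite_subalgebra M "F n" by (rule sb_sfs[OF sb])
    interpret P: sigma_finite_subalgebra M "F (n - 1)" by (rule sb_sfs[OF sb])
    have fi: "integrable M ?f" using mo_facts(2)[OF mo] t by simp
    have fm[measurable]: "?f \<in> borel_measurable M" using mo_facts(1)[OF mo] t by simp
    have fpos: "\<forall>x\<in>space M. ?f x > 0" using mo_facts(4)[OF mo] t by simp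
    have wm[measurable]: "?w \<in> borel_measurable M" by measurable
    have An: "AE x in M. nn_cond_exp M (F n) (\<lambda>y. ennreal (?w y)) x < \<infinity>"
      using KA t by (auto elim: AE_mp)
    have Ap: "AE x in M. nn_cond_exp M (F (n - 1)) (\<lambda>y. ennreal (?w y)) x < \<infinity> \<and>
      real_cond_exp M (F (n - 1)) ?f x *
        enn2real (nn_cond_exp M (F (n - 1)) (\<lambda>y. ennreal (?w y)) x) powr (q - 1) \<le> K"
      using KA t by blast
    have J: "AE x in M. real_cond_exp M (F n) ?f x > 0 \<and>
     real_cond_exp M (F n) ?f x powr (1 / (q - 1)) * enn2real (nn_cond_exp M (F n) (\<lambda>y. ennreal (?w y)) x) \<ge> 1"
      by (rule N.cond_young[OF q fm fpos fi An])
    have Rg: "AE x in M. nn_cond_exp M (F n) (\<lambda>y. ennreal (?w y)) x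
        \<le> ennreal R * nn_cond_exp M (F (n - 1)) (\<lambda>y. ennreal (?w y)) x"
      by (rule reg_nn[OF sb R Rpos wm _ n]) (use Ap in auto)
    have pp: "AE x in M. real_cond_exp M (F (n - 1)) ?f x \<ge> 0"
      by (rule P.real_cond_exp_pos) (use fpos in \<open>auto intro!: AE_I2 less_imp_le\<close>)
    from An Ap J Rg pp show "AE x in M.
      inverse K2 * real_cond_exp M (F (n - 1)) ?f x \<le> real_cond_exp M (F n) ?f x"
    proof eventually_elim
      case (elim x)
      define b where "b = enn2real (nn_cond_exp M (F n) (\<lambda>y. ennreal (?w y)) x)"
      define b' where "b' = enn2real (nn_cond_exp M (F (n - 1)) (\<lambda>y. ennreal (?w y)) x)"
      have eb: "nn_cond_exp M (F n) (\<lambda>y. ennreal (?w y)) x = ennreal b" "b \<ge> 0"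
        using elim(1) unfolding b_def by auto
      have eb': "nn_cond_exp M (F (n - 1)) (\<lambda>y. ennreal (?w y)) x = ennreal b'" "b' \<ge> 0"
        using elim(2) unfolding b'_def by auto
      have "ennreal b \<le> ennreal (R * b')" using elim(4) eb eb' Rpos by (simp add: ennreal_mult)
      then have reg: "b \<le> R * b'" using Rpos eb'(2) by simp
      have "real_cond_exp M (F (n - 1)) ?f x \<le> K * R powr (q - 1) * real_cond_exp M (F n) ?f x"
        by (rule aq_arith[OF q Rpos K _ eb(2) eb'(2) elim(5) _ reg])
           (use elim(2,3) in \<open>auto simp: b_def b'_def\<close>)
      then show ?case using K2 by (simp add: K2_def field_simps)
    qed
  qed
  then show ?thesis using K2 by blast
qed

theorem lemma2p8:
  fixes M :: "'a measure" and F :: "nat \<Rightarrow> 'a measure" and \<phi> :: "'a \<Rightarrow> real \<Rightarrow> real"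
  assumes "stoch_basis M F"
    and "musielak_orlicz M \<phi>"
    and "uniform_Ainf M F \<phi>"
    and "regular_basis M F"
  shows "class_S M F \<phi>"
proof -
  note sb = assms(1) and mo = assms(2)
  obtain R where Rpos: "R > 0" and R: "\<forall>f. martingale M F f \<and> (\<forall>n. AE x in M. f n x \<ge> 0) \<longrightarrow>
       (\<forall>n\<ge>1. AE x in M. f n x \<le> R * f (n - 1) x)"
    using assms(4) unfolding regular_basis_def by blast
  obtain K2 where K2: "K2 > 0" and down: "\<forall>t>0. \<forall>n\<ge>1. AE x in M.
      inverse K2 * real_cond_exp M (F (n - 1)) (\<lambda>y. \<phi> y t) x \<le> real_cond_exp M (F n) (\<lambda>y. \<phi> y t) x"
    using assms(3) down_A1[OF sb mo] down_Aq[OF sb mo _ _ R Rpos] unfolding uniform_Ainf_def by blast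
  define K where "K = max K2 R"
  have K: "K > 0" using K2 by (simp add: K_def)
  have "\<forall>t\<ge>0. \<forall>n\<ge>1. AE x in M.
      inverse K * real_cond_exp M (F (n - 1)) (\<lambda>y. \<phi> y t) x \<le> real_cond_exp M (F n) (\<lambda>y. \<phi> y t) x \<and>
      real_cond_exp M (F n) (\<lambda>y. \<phi> y t) x \<le> K * real_cond_exp M (F (n - 1)) (\<lambda>y. \<phi> y t) x"
  proof (intro allI impI)
    fix t :: real and n :: nat assume t: "t \<ge> 0" and n: "n \<ge> 1"
    let ?f = "\<lambda>y. \<phi> y t"
    interpret N: sigma_finite_subalgebra M "F n" by (rule sb_sfs[OF sb])
    interpret P: sigma_finite_subalgebra M "F (n - 1)" by (rule sb_sfs[OF sb])
    have fi: "integrable M ?f" using mo_facts(2)[OF mo] t by simp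
    have fm[measurable]: "?f \<in> borel_measurable M" using mo_facts(1)[OF mo] t by simp
    have fnn: "AE x in M. ?f x \<ge> 0" using mo_facts(3)[OF mo] t by (auto intro!: AE_I2)
    have up: "AE x in M. real_cond_exp M (F n) ?f x \<le> R * real_cond_exp M (F (n - 1)) ?f x"
      by (rule reg_real[OF sb R fi fnn n])
    have pp: "AE x in M. real_cond_exp M (F (n - 1)) ?f x \<ge> 0"
      by (rule P.real_cond_exp_pos[OF fnn fm])
    have pn: "AE x in M. real_cond_exp M (F n) ?f x \<ge> 0"
      by (rule N.real_cond_exp_pos[OF fnn fm])
    have dn: "AE x in M. inverse K2 * real_cond_exp M (F (n - 1)) ?f x \<le> real_cond_exp M (F n) ?f x"
    proof (cases "t = 0")
      case True
      have z: "AE x in M. real_cond_exp M (F (n - 1)) ?f x = 0"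
      proof -
        have "AE x in M. real_cond_exp M (F (n - 1)) ?f x = real_cond_exp M (F (n - 1)) (\<lambda>_. 0) x"
          by (rule P.real_cond_exp_cong) (use mo_facts(5)[OF mo] fm True in \<open>auto intro!: AE_I2\<close>)
        moreover have "AE x in M. real_cond_exp M (F (n - 1)) (\<lambda>_. 0) x = 0"
          using P.real_cond_exp_F_meas[of "\<lambda>_. 0"] by simp
        ultimately show ?thesis by auto
      qed
      from z pn show ?thesis by eventually_elim simp
    next
      case False
      then show ?thesis using down t n by auto
    qed
    from up pp pn dn show "AE x in M.
      inverse K * real_cond_exp M (F (n - 1)) ?f x \<le> real_cond_exp M (F n) ?f x \<and>
      real_cond_exp M (F n) ?f x \<le> K * real_cond_exp M (F (n - 1)) ?f x"
    proof eventually_elim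
      case (elim x)
      have "inverse K \<le> inverse K2" using K2 by (simp add: K_def)
      then have "inverse K * real_cond_exp M (F (n - 1)) ?f x \<le> inverse K2 * real_cond_exp M (F (n - 1)) ?f x"
        using elim(2) by (rule mult_right_mono)
      moreover have "R * real_cond_exp M (F (n - 1)) ?f x \<le> K * real_cond_exp M (F (n - 1)) ?f x"
        using elim(2) by (intro mult_right_mono) (auto simp: K_def)
      ultimately show ?case using elim by linarith
    qed
  qed
  then show ?thesis unfolding class_S_def using K by blast
qed

end
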